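(* Let $c\in\mathbb{N}$ and $I=\mathbb{N}\times[c]$. Then for any $\mathrm{Sym}$-invariant lattice $L\subseteq\mathbb{Z}^{(I)}$, the monoid $M=L\cap\mathbb{Z}_{\ge0}^{(I)}$ has a finite equivariant Hilbert basis.
   Context: $\mathbb{N}=\{1,2,\dots\}$. $\mathbb{Z}^{(I)}$ is the free abelian group with basis $I$ (standard basis $\mathbf{e}_{i,j}$), $\mathbb{Z}_{\ge0}^{(I)}$ its nonnegative vectors; a lattice is a subgroup. $\mathrm{Sym}$ is the group of permutations of $\mathbb{N}$ fixing all but finitely many points, acting by linear extension of $\sigma(\mathbf{e}_{i,j})=\mathbf{e}_{\sigma(i),j}$. A Hilbert basis of a monoid is a minimal generating set w.r.t. $\mathbb{Z}_{\ge0}$-linear combinations; $\mathcal{H}\subseteq M$ is an equivariant Hilbert basis if $\mathrm{Sym}(\mathcal{H})=\{\sigma(\mathbf{h})\mid\sigma\in\mathrm{Sym},\mathbf{h}\in\mathcal{H}\}$ is a Hilbert basis of $M$. *)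

theory Defs
  imports Main
begin

text \<open>Vectors of Z^(I), I = N x [c] with N = {1,2,...} and [c] = {1..c}, are
  modelled as finitely supported functions nat x nat => int vanishing outside I.\<close>

definition index_set :: "nat \<Rightarrow> (nat \<times> nat) set" where
  "index_set c = {(i, j). 1 \<le> i \<and> 1 \<le> j \<and> j \<le> c}"

definition Zfin :: "nat \<Rightarrow> (nat \<times> nat \<Rightarrow> int) set" where
  "Zfin c = {v. finite {p. v p \<noteq> 0} \<and> (\<forall>p. v p \<noteq> 0 \<longrightarrow> p \<in> index_set c)}"

definition nonneg_vec :: "(nat \<times> nat \<Rightarrow> int) \<Rightarrow> bool" where
  "nonneg_vec v \<longleftrightarrow> (\<forall>p. 0 \<le> v p)"

text \<open>Sym: permutations of N = {1,2,...} moving only finitely many points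
  (0 is not in N and is kept fixed).\<close>
definition Sym :: "(nat \<Rightarrow> nat) set" where
  "Sym = {\<sigma>. bij \<sigma> \<and> finite {i. \<sigma> i \<noteq> i} \<and> \<sigma> 0 = 0}"

text \<open>Linear extension of sigma(e_(i,j)) = e_(sigma(i),j).\<close>
definition act :: "(nat \<Rightarrow> nat) \<Rightarrow> (nat \<times> nat \<Rightarrow> int) \<Rightarrow> (nat \<times> nat \<Rightarrow> int)" where
  "act \<sigma> v = (\<lambda>(i, j). v (inv \<sigma> i, j))"

definition is_lattice :: "nat \<Rightarrow> (nat \<times> nat \<Rightarrow> int) set \<Rightarrow> bool" where
  "is_lattice c L \<longleftrightarrow> L \<subseteq> Zfin c \<and> (\<lambda>_. 0) \<in> L \<and>
     (\<forall>u\<in>L. \<forall>v\<in>L. (\<lambda>p. u p + v p) \<in> L) \<and> (\<forall>v\<in>L. (\<lambda>p. - v p) \<in> L)"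

definition sym_invariant :: "(nat \<times> nat \<Rightarrow> int) set \<Rightarrow> bool" where
  "sym_invariant L \<longleftrightarrow> (\<forall>\<sigma>\<in>Sym. \<forall>v\<in>L. act \<sigma> v \<in> L)"

inductive_set nn_span :: "(nat \<times> nat \<Rightarrow> int) set \<Rightarrow> (nat \<times> nat \<Rightarrow> int) set"
  for H where
  zero: "(\<lambda>_. 0) \<in> nn_span H"
| add_gen: "h \<in> H \<Longrightarrow> v \<in> nn_span H \<Longrightarrow> (\<lambda>p. h p + v p) \<in> nn_span H"

definition hilbert_basis ::
  "(nat \<times> nat \<Rightarrow> int) set \<Rightarrow> (nat \<times> nat \<Rightarrow> int) set \<Rightarrow> bool" where
  "hilbert_basis M H \<longleftrightarrow> nn_span H = M \<and> (\<forall>H'. H' \<subset> H \<longrightarrow> nn_span H' \<noteq> M)"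

definition sym_orbit :: "(nat \<times> nat \<Rightarrow> int) set \<Rightarrow> (nat \<times> nat \<Rightarrow> int) set" where
  "sym_orbit H = {act \<sigma> h | \<sigma> h. \<sigma> \<in> Sym \<and> h \<in> H}"

definition equivariant_hilbert_basis ::
  "(nat \<times> nat \<Rightarrow> int) set \<Rightarrow> (nat \<times> nat \<Rightarrow> int) set \<Rightarrow> bool" where
  "equivariant_hilbert_basis M H \<longleftrightarrow> H \<subseteq> M \<and> hilbert_basis M (sym_orbit H)"

end

theory Submission
  imports Defs
begin


lemma mono_sub_int:
  fixes s :: "nat \<Rightarrow> int"
  assumes nn: "\<And>n. s n \<ge> 0"
  shows "\<exists>\<psi>. strict_mono \<psi> \<and> (\<forall>m n::nat. m \<le> n \<longrightarrow> s (\<psi> m) \<le> s (\<psi> n))"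
proof -
  define nxt where "nxt m = (SOME x. x > m \<and> (\<forall>y>m. s x \<le> s y))" for m
  have nxt: "nxt m > m \<and> (\<forall>y>m. s (nxt m) \<le> s y)" for m
  proof -
    obtain x where x: "x > m" "\<forall>y. y > m \<longrightarrow> nat (s x) \<le> nat (s y)"
      using ex_has_least_nat[of "\<lambda>y. y > m" "Suc m" "\<lambda>y. nat (s y)"] by auto
    have "\<forall>y>m. s x \<le> s y"
    proof (intro allI impI)
      fix y assume "y > m"
      then have "nat (s x) \<le> nat (s y)" using x(2) by blast
      then show "s x \<le> s y" using nn[of x] nn[of y] by linarith
    qed
    then have "\<exists>x. x > m \<and> (\<forall>y>m. s x \<le> s y)" using x(1) by blast
    from someI_ex[OF this] show ?thesis unfolding nxt_def .
  qed
  define \<psi> where "\<psi> k = (nxt ^^ Suc k) 0" for k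
  have \<psi>S: "\<psi> (Suc k) = nxt (\<psi> k)" for k by (simp add: \<psi>_def)
  have lt: "\<psi> k < \<psi> (Suc k)" for k using nxt \<psi>S by simp
  have pre: "\<forall>y>\<psi> k. s (\<psi> k) \<le> s y" for k
  proof (cases k)
    case 0
    have "\<psi> 0 = nxt 0" by (simp add: \<psi>_def)
    then show ?thesis using nxt[of 0] 0 by auto
  next
    case (Suc k')
    then have "\<psi> k = nxt (\<psi> k')" using \<psi>S by simp
    moreover have "\<psi> k' < \<psi> k" using lt Suc by simp
    ultimately show ?thesis using nxt[of "\<psi> k'"] by auto
  qed
  have "s (\<psi> k) \<le> s (\<psi> (Suc k))" for k using pre lt by blast
  then have "\<forall>m n::nat. m \<le> n \<longrightarrow> s (\<psi> m) \<le> s (\<psi> n)"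
    using lift_Suc_mono_le[of "\<lambda>k. s (\<psi> k)"] by blast
  moreover have "strict_mono \<psi>" using lt by (simp add: strict_mono_Suc_iff)
  ultimately show ?thesis by blast
qed

lemma dickson:
  fixes g :: "nat \<Rightarrow> nat \<Rightarrow> int"
  assumes "finite J" and "\<And>n j. g n j \<ge> 0"
  shows "\<exists>\<phi>. strict_mono \<phi> \<and> (\<forall>m n::nat. m \<le> n \<longrightarrow> (\<forall>j\<in>J. g (\<phi> m) j \<le> g (\<phi> n) j))"
  using assms(1)
proof (induction J rule: finite_induct)
  case empty
  have "strict_mono (\<lambda>n::nat. n)" by (simp add: strict_mono_def)
  then show ?case by blast
next
  case (insert a J)
  then obtain \<phi> where \<phi>: "strict_mono \<phi>" "\<forall>m n::nat. m \<le> n \<longrightarrow> (\<forall>j\<in>J. g (\<phi> m) j \<le> g (\<phi> n) j)"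
    by blast
  obtain \<psi> where \<psi>: "strict_mono \<psi>" "\<forall>m n::nat. m \<le> n \<longrightarrow> g (\<phi> (\<psi> m)) a \<le> g (\<phi> (\<psi> n)) a"
    using mono_sub_int[of "\<lambda>n. g (\<phi> n) a"] assms(2) by blast
  have "strict_mono (\<phi> \<circ> \<psi>)" using \<phi>(1) \<psi>(1) by (simp add: strict_mono_def)
  moreover have "\<forall>m n. m \<le> n \<longrightarrow> (\<forall>j\<in>insert a J. g ((\<phi> \<circ> \<psi>) m) j \<le> g ((\<phi> \<circ> \<psi>) n) j)"
    using \<phi>(2) \<psi> by (auto simp: strict_mono_less_eq)
  ultimately show ?case by blast
qed

definition tr :: "nat \<Rightarrow> nat \<Rightarrow> nat \<Rightarrow> nat" where
  "tr a b x = (if x = a then b else if x = b then a else x)"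

lemma tr_bij: "bij (tr a b)"
proof -
  have e: "tr a b \<circ> tr a b = id" by (auto simp: tr_def)
  show ?thesis by (rule o_bij[OF e e])
qed

lemma Sym_ext:
  assumes "finite S" "0 \<notin> S" "inj_on h S" "0 \<notin> h ` S"
  shows "\<exists>\<sigma>\<in>Sym. \<forall>s\<in>S. \<sigma> s = h s"
  using assms
proof (induction S arbitrary: h rule: finite_induct)
  case empty
  have "id \<in> Sym" by (simp add: Sym_def)
  then show ?case by blast
next
  case (insert a S)
  have "inj_on h S" using insert.prems(2) by (simp add: inj_on_insert)
  moreover have "0 \<notin> h ` S" using insert.prems(3) by simp
  ultimately have "\<exists>\<sigma>\<in>Sym. \<forall>s\<in>S. \<sigma> s = h s"
    using insert.IH insert.prems(1) by blast
  then obtain \<sigma> where \<sigma>: "\<sigma> \<in> Sym" "\<forall>s\<in>S. \<sigma> s = h s" by blast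
  have bs: "bij \<sigma>" "finite {i. \<sigma> i \<noteq> i}" "\<sigma> 0 = 0" using \<sigma>(1) by (auto simp: Sym_def)
  define \<sigma>' where "\<sigma>' = tr (\<sigma> a) (h a) \<circ> \<sigma>"
  have b1: "bij \<sigma>'" unfolding \<sigma>'_def using bs(1) tr_bij by (rule bij_comp)
  have "{i. \<sigma>' i \<noteq> i} \<subseteq> {i. \<sigma> i \<noteq> i} \<union> {\<sigma> a, h a}"
  proof
    fix x assume x: "x \<in> {i. \<sigma>' i \<noteq> i}"
    show "x \<in> {i. \<sigma> i \<noteq> i} \<union> {\<sigma> a, h a}"
    proof (cases "\<sigma> x = x")
      case True
      then have "tr (\<sigma> a) (h a) x \<noteq> x" using x by (simp add: \<sigma>'_def)
      then show ?thesis unfolding tr_def by (auto split: if_splits)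
    next
      case False then show ?thesis by simp
    qed
  qed
  then have b2: "finite {i. \<sigma>' i \<noteq> i}" using bs(2) by (meson finite_Un finite_insert finite.emptyI finite_subset)
  have injs: "inj \<sigma>" using bs(1) by (rule bij_is_inj)
  have sa: "\<sigma> a \<noteq> 0"
  proof
    assume "\<sigma> a = 0"
    then have "\<sigma> a = \<sigma> 0" using bs(3) by simp
    then have "a = 0" using injs by (simp add: inj_eq)
    then show False using insert.prems(1) by simp
  qed
  have "h a \<noteq> 0" using insert.prems(3) by force
  then have b3: "\<sigma>' 0 = 0" using bs(3) sa by (simp add: \<sigma>'_def tr_def)
  have "\<sigma>' \<in> Sym" using b1 b2 b3 by (simp add: Sym_def)
  moreover have "\<forall>s\<in>insert a S. \<sigma>' s = h s"
  proof
    fix s assume s: "s \<in> insert a S"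
    show "\<sigma>' s = h s"
    proof (cases "s = a")
      case True then show ?thesis by (simp add: \<sigma>'_def tr_def)
    next
      case False
      then have sS: "s \<in> S" using s by auto
      have "h s \<noteq> h a" using inj_on_eq_iff[OF insert.prems(2) s, of a] False by simp
      moreover have "\<sigma> s \<noteq> \<sigma> a" using injs False by (simp add: inj_eq)
      moreover have "\<sigma> s = h s" using \<sigma>(2) sS by blast
      ultimately show ?thesis by (simp add: \<sigma>'_def tr_def)
    qed
  qed
  ultimately show ?case by blast
qed


type_synonym vec = "nat \<times> nat \<Rightarrow> int"

definition V :: "nat \<Rightarrow> vec set" where "V c = {v. nonneg_vec v \<and> v \<in> Zfin c}"
definition vsupp :: "vec \<Rightarrow> nat set" where "vsupp v = {i. \<exists>j. v (i, j) \<noteq> 0}"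
definition emb :: "vec \<Rightarrow> vec \<Rightarrow> bool" where
  "emb u v = (\<exists>h. inj_on h (vsupp u) \<and> (\<forall>i\<in>vsupp u. \<forall>j. u (i, j) \<le> v (h i, j)))"
definition zc :: "vec \<Rightarrow> nat \<Rightarrow> vec" where
  "zc v k = (\<lambda>p. if fst p = k then 0 else v p)"

lemma vsupp_finite: "v \<in> Zfin c \<Longrightarrow> finite (vsupp v)"
proof -
  assume "v \<in> Zfin c"
  then have "finite {p. v p \<noteq> 0}" by (simp add: Zfin_def)
  moreover have "vsupp v = fst ` {p. v p \<noteq> 0}" by (force simp: vsupp_def)
  ultimately show ?thesis by simp
qed

lemma vsupp_nz: "v \<in> Zfin c \<Longrightarrow> i \<in> vsupp v \<Longrightarrow> i \<noteq> 0"
  by (auto simp: Zfin_def vsupp_def index_set_def)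

lemma zc_V: "v \<in> V c \<Longrightarrow> zc v k \<in> V c"
proof -
  assume v: "v \<in> V c"
  have "{p. zc v k p \<noteq> 0} \<subseteq> {p. v p \<noteq> 0}" by (auto simp: zc_def)
  moreover have "finite {p. v p \<noteq> 0}" using v by (simp add: V_def Zfin_def)
  ultimately have "finite {p. zc v k p \<noteq> 0}" by (rule finite_subset)
  moreover have "\<forall>p. zc v k p \<noteq> 0 \<longrightarrow> p \<in> index_set c"
    using v by (simp add: V_def Zfin_def zc_def)
  moreover have "nonneg_vec (zc v k)"
    using v by (simp add: V_def nonneg_vec_def zc_def)
  ultimately show ?thesis by (simp add: V_def Zfin_def)
qed

lemma vsupp_zc: "vsupp (zc v k) = vsupp v - {k}"
  by (auto simp: vsupp_def zc_def)

lemma zc_le: "nonneg_vec v \<Longrightarrow> zc v k p \<le> v p"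
  by (cases p) (auto simp: zc_def nonneg_vec_def)

lemma emb_empty: "vsupp u = {} \<Longrightarrow> emb u v"
  by (auto simp: emb_def)

lemma emb_mono2: "emb u w \<Longrightarrow> (\<And>p. w p \<le> v p) \<Longrightarrow> emb u v"
  unfolding emb_def by (meson order_trans)

lemma emb_step:
  assumes u: "nonneg_vec u" and v: "nonneg_vec v"
    and e: "emb (zc u ku) (zc v kv)" and hd: "\<forall>j. u (ku, j) \<le> v (kv, j)"
  shows "emb u v"
proof -
  obtain h where h: "inj_on h (vsupp (zc u ku))"
    "\<forall>i\<in>vsupp (zc u ku). \<forall>j. zc u ku (i, j) \<le> zc v kv (h i, j)"
    using e by (auto simp: emb_def)
  define S where "S = vsupp (zc u ku)"
  have S: "S = vsupp u - {ku}" by (simp add: S_def vsupp_zc)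
  have hS: "h s \<noteq> kv" if sS: "s \<in> S" for s
  proof -
    obtain j where "zc u ku (s, j) \<noteq> 0" using sS unfolding S_def vsupp_def by blast
    then have "zc u ku (s, j) > 0" using u by (auto simp: zc_def nonneg_vec_def order_less_le)
    moreover have "zc u ku (s, j) \<le> zc v kv (h s, j)" using h(2) sS S_def by blast
    ultimately have "zc v kv (h s, j) > 0" by linarith
    then show ?thesis by (auto simp: zc_def)
  qed
  define h' where "h' = h(ku := kv)"
  have "inj_on h' S" using h(1) S by (auto simp: h'_def S_def inj_on_def)
  moreover have "h' ku \<notin> h' ` (S - {ku})" using hS S by (auto simp: h'_def)
  ultimately have "inj_on h' (insert ku S)" by (simp add: inj_on_insert)
  then have "inj_on h' (vsupp u)" using S by (auto intro: inj_on_subset)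
  moreover have "\<forall>i\<in>vsupp u. \<forall>j. u (i, j) \<le> v (h' i, j)"
  proof (intro ballI allI)
    fix i j assume i: "i \<in> vsupp u"
    show "u (i, j) \<le> v (h' i, j)"
    proof (cases "i = ku")
      case True then show ?thesis using hd by (simp add: h'_def)
    next
      case False
      then have "i \<in> S" using i S by auto
      then have "zc u ku (i, j) \<le> zc v kv (h i, j)" using h(2) S_def by blast
      also have "\<dots> \<le> v (h i, j)" using zc_le[OF v] by blast
      finally show ?thesis using False by (simp add: zc_def h'_def)
    qed
  qed
  ultimately show ?thesis by (auto simp: emb_def)
qed

definition badseq :: "nat \<Rightarrow> (nat \<Rightarrow> vec) \<Rightarrow> bool" where
  "badseq c f \<longleftrightarrow> (\<forall>n. f n \<in> V c) \<and> (\<forall>i j. i < j \<longrightarrow> \<not> emb (f i) (f j))"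

definition pfx :: "vec list \<Rightarrow> (nat \<Rightarrow> vec) \<Rightarrow> bool" where
  "pfx p g \<longleftrightarrow> (\<forall>k<length p. g k = p ! k)"

definition pickx :: "nat \<Rightarrow> vec list \<Rightarrow> vec" where
  "pickx c p = (SOME x. \<exists>g. badseq c g \<and> pfx p g \<and> g (length p) = x \<and>
     (\<forall>g'. badseq c g' \<and> pfx p g' \<longrightarrow> card (vsupp x) \<le> card (vsupp (g' (length p)))))"

lemma pickx_spec:
  assumes "\<exists>g. badseq c g \<and> pfx p g"
  shows "\<exists>g. badseq c g \<and> pfx p g \<and> g (length p) = pickx c p \<and>
     (\<forall>g'. badseq c g' \<and> pfx p g' \<longrightarrow> card (vsupp (pickx c p)) \<le> card (vsupp (g' (length p))))"
proof -
  obtain g0 where g0: "badseq c g0 \<and> pfx p g0" using assms by blast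
  obtain g where g: "badseq c g \<and> pfx p g"
    "\<forall>g'. badseq c g' \<and> pfx p g' \<longrightarrow> card (vsupp (g (length p))) \<le> card (vsupp (g' (length p)))"
    using ex_has_least_nat[of "\<lambda>g. badseq c g \<and> pfx p g" g0 "\<lambda>g. card (vsupp (g (length p)))"] g0
    by blast
  then have "\<exists>x. \<exists>g. badseq c g \<and> pfx p g \<and> g (length p) = x \<and>
     (\<forall>g'. badseq c g' \<and> pfx p g' \<longrightarrow> card (vsupp x) \<le> card (vsupp (g' (length p))))" by blast
  from someI_ex[OF this] show ?thesis unfolding pickx_def by blast
qed

fun pre :: "nat \<Rightarrow> nat \<Rightarrow> vec list" where
  "pre c 0 = []"
| "pre c (Suc n) = pre c n @ [pickx c (pre c n)]"

lemma length_pre: "length (pre c n) = n"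
  by (induction n) auto

lemma pre_nth: "k < n \<Longrightarrow> pre c n ! k = pickx c (pre c k)"
proof (induction n)
  case 0 then show ?case by simp
next
  case (Suc n) then show ?case
    by (cases "k = n") (auto simp: nth_append length_pre)
qed

lemma ext_pre:
  assumes "\<exists>g. badseq c g"
  shows "\<exists>g. badseq c g \<and> pfx (pre c n) g"
proof (induction n)
  case 0 then show ?case using assms by (simp add: pfx_def)
next
  case (Suc n)
  from pickx_spec[OF this] obtain g where g: "badseq c g" "pfx (pre c n) g"
    "g n = pickx c (pre c n)" by (auto simp: length_pre)
  have "pfx (pre c (Suc n)) g" using g(2,3)
    by (auto simp: pfx_def length_pre nth_append less_Suc_eq)
  then show ?case using g(1) by blast
qed


lemma V_col_zero: "v \<in> V c \<Longrightarrow> j \<notin> {1..c} \<Longrightarrow> v (i, j) = 0"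
  by (auto simp: V_def Zfin_def index_set_def)

theorem higman:
  fixes f :: "nat \<Rightarrow> vec"
  assumes f: "\<And>n. f n \<in> V c"
  shows "\<exists>i j. i < j \<and> emb (f i) (f j)"
proof (rule ccontr)
  assume "\<not> ?thesis"
  then have "badseq c f" using f unfolding badseq_def by blast
  then have ex: "\<exists>g. badseq c g" by blast
  define F where "F n = pickx c (pre c n)" for n
  have agree: "\<exists>g. badseq c g \<and> (\<forall>k\<le>n. g k = F k)" for n
  proof -
    obtain g where g: "badseq c g" "pfx (pre c (Suc n)) g" using ext_pre[OF ex] by blast
    have "\<forall>k\<le>n. g k = F k"
    proof (intro allI impI)
      fix k assume "k \<le> n"
      then have "k < length (pre c (Suc n))" by (simp add: length_pre del: pre.simps)
      then have "g k = pre c (Suc n) ! k" using g(2) unfolding pfx_def by blast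
      also have "\<dots> = F k" using \<open>k \<le> n\<close> by (simp add: pre_nth F_def del: pre.simps)
      finally show "g k = F k" .
    qed
    then show ?thesis using g(1) by blast
  qed
  have FV: "F n \<in> V c" for n using agree[of n] unfolding badseq_def by (metis order_refl)
  have Fbad: "\<not> emb (F i) (F j)" if "i < j" for i j
  proof -
    obtain g where g: "badseq c g" "\<forall>k\<le>j. g k = F k" using agree by blast
    have "g i = F i" "g j = F j" using g(2) that by auto
    then show ?thesis using g(1) that unfolding badseq_def by metis
  qed
  have Fmin: "card (vsupp (F n)) \<le> card (vsupp (g n))"
    if g: "badseq c g" "\<forall>k<n. g k = F k" for g n
  proof -
    have "\<exists>g. badseq c g \<and> pfx (pre c n) g" using ext_pre[OF ex] by blast
    from pickx_spec[OF this] have "\<forall>g'. badseq c g' \<and> pfx (pre c n) g' \<longrightarrow>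
       card (vsupp (F n)) \<le> card (vsupp (g' n))" unfolding length_pre F_def by blast
    moreover have "pfx (pre c n) g" using g(2) by (simp add: pfx_def length_pre pre_nth F_def del: pre.simps)
    ultimately show ?thesis using g(1) by blast
  qed
  have ne: "vsupp (F n) \<noteq> {}" for n
    using Fbad[of n "Suc n"] emb_empty by blast
  have fin: "finite (vsupp (F n))" for n using FV[of n] by (auto simp: V_def intro: vsupp_finite)
  define k where "k n = Min (vsupp (F n))" for n
  have kin: "k n \<in> vsupp (F n)" for n using ne fin k_def by simp
  have nn: "\<And>n j. F n (k n, j) \<ge> 0" using FV by (auto simp: V_def nonneg_vec_def)
  obtain \<phi> where \<phi>: "strict_mono \<phi>"
    "\<forall>m n::nat. m \<le> n \<longrightarrow> (\<forall>j\<in>{1..c}. F (\<phi> m) (k (\<phi> m), j) \<le> F (\<phi> n) (k (\<phi> n), j))"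
    using dickson[of "{1..c}" "\<lambda>n j. F n (k n, j)", OF _ nn] by auto
  have hd: "\<forall>j. F (\<phi> m) (k (\<phi> m), j) \<le> F (\<phi> n) (k (\<phi> n), j)" if "m \<le> n" for m n
  proof
    fix j show "F (\<phi> m) (k (\<phi> m), j) \<le> F (\<phi> n) (k (\<phi> n), j)"
    proof (cases "j \<in> {1..c}")
      case True then show ?thesis using \<phi>(2) that by blast
    next
      case False then show ?thesis using V_col_zero[OF FV] by simp
    qed
  qed
  define T where "T n = zc (F (\<phi> n)) (k (\<phi> n))" for n
  define G where "G n = (if n < \<phi> 0 then F n else T (n - \<phi> 0))" for n
  have phi_ge: "\<phi> 0 \<le> \<phi> n" for n using \<phi>(1) by (simp add: strict_mono_less_eq)
  have TV: "T n \<in> V c" for n using zc_V[OF FV] T_def by simp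
  have Tle: "T n p \<le> F (\<phi> n) p" for n p
    using zc_le FV by (auto simp: T_def V_def)
  have "badseq c G"
    unfolding badseq_def
  proof (intro conjI allI impI)
    fix n show "G n \<in> V c" using FV TV by (simp add: G_def)
  next
    fix i j :: nat assume ij: "i < j"
    show "\<not> emb (G i) (G j)"
    proof (cases "j < \<phi> 0")
      case True then show ?thesis using ij Fbad by (simp add: G_def)
    next
      case jF: False
      show ?thesis
      proof (cases "i < \<phi> 0")
        case True
        have "i < \<phi> (j - \<phi> 0)" using True phi_ge[of "j - \<phi> 0"] by simp
        then have "\<not> emb (F i) (F (\<phi> (j - \<phi> 0)))" using Fbad by blast
        then show ?thesis using True jF emb_mono2[OF _ Tle] by (auto simp: G_def)
      next
        case False
        define a where "a = i - \<phi> 0"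
        define b where "b = j - \<phi> 0"
        have ab: "a < b" using False ij by (simp add: a_def b_def)
        have "\<not> emb (F (\<phi> a)) (F (\<phi> b))" using Fbad \<phi>(1) ab by (simp add: strict_mono_less)
        moreover have "emb (T a) (T b) \<Longrightarrow> emb (F (\<phi> a)) (F (\<phi> b))"
          unfolding T_def
          by (rule emb_step) (use FV hd ab in \<open>auto simp: V_def\<close>)
        ultimately show ?thesis using False jF unfolding G_def a_def b_def by auto
      qed
    qed
  qed
  moreover have "\<forall>m<\<phi> 0. G m = F m" by (simp add: G_def)
  ultimately have "card (vsupp (F (\<phi> 0))) \<le> card (vsupp (G (\<phi> 0)))" using Fmin by blast
  also have "\<dots> = card (vsupp (F (\<phi> 0)) - {k (\<phi> 0)})" by (simp add: G_def T_def vsupp_zc)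
  also have "\<dots> < card (vsupp (F (\<phi> 0)))" using fin kin by (rule card_Diff1_less)
  finally show False by simp
qed



definition zerov :: vec where "zerov = (\<lambda>_. 0)"
definition addv :: "vec \<Rightarrow> vec \<Rightarrow> vec" where "addv a b = (\<lambda>p. a p + b p)"

lemma act_at: "\<sigma> \<in> Sym \<Longrightarrow> act \<sigma> u (\<sigma> i, j) = u (i, j)"
proof -
  assume "\<sigma> \<in> Sym"
  then have "inj \<sigma>" by (simp add: Sym_def bij_is_inj)
  then show ?thesis by (simp add: act_def)
qed

lemma act_le:
  assumes s: "\<sigma> \<in> Sym" and le: "\<And>i j. u (i, j) \<le> v (\<sigma> i, j)"
  shows "act \<sigma> u p \<le> v p"
proof (cases p)
  case (Pair i' j)
  have "bij \<sigma>" using s by (simp add: Sym_def)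
  then have "\<sigma> (inv \<sigma> i') = i'" by (simp add: bij_is_surj surj_f_inv_f)
  then show ?thesis using le[of "inv \<sigma> i'" j] Pair by (simp add: act_def)
qed

lemma Sym_inv: "\<sigma> \<in> Sym \<Longrightarrow> inv \<sigma> \<in> Sym"
proof -
  assume s: "\<sigma> \<in> Sym"
  then have b: "bij \<sigma>" "finite {i. \<sigma> i \<noteq> i}" "\<sigma> 0 = 0" by (auto simp: Sym_def)
  have "bij (inv \<sigma>)" using b(1) by (rule bij_imp_bij_inv)
  moreover have "{i. inv \<sigma> i \<noteq> i} = {i. \<sigma> i \<noteq> i}"
  proof -
    have "inv \<sigma> i = i \<longleftrightarrow> \<sigma> i = i" for i
      using b(1) by (metis bij_inv_eq_iff)
    then show ?thesis by blast
  qed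
  moreover have "inv \<sigma> 0 = 0" using b(1) b(3) by (metis bij_inv_eq_iff)
  ultimately show ?thesis using b(2) by (simp add: Sym_def)
qed

lemma act_inv_act: "\<sigma> \<in> Sym \<Longrightarrow> act (inv \<sigma>) (act \<sigma> u) = u"
proof -
  assume "\<sigma> \<in> Sym"
  then have b: "bij \<sigma>" by (simp add: Sym_def)
  then have "inv (inv \<sigma>) = \<sigma>" by (simp add: inv_inv_eq)
  moreover have "inv \<sigma> (\<sigma> i) = i" for i using b by (simp add: bij_is_inj)
  ultimately show ?thesis by (auto simp: act_def)
qed

lemma act_addv: "act \<sigma> (addv a b) = addv (act \<sigma> a) (act \<sigma> b)"
  by (auto simp: act_def addv_def)

lemma act_zero_iff: "\<sigma> \<in> Sym \<Longrightarrow> act \<sigma> u = zerov \<longleftrightarrow> u = zerov"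
proof
  assume s: "\<sigma> \<in> Sym" and z: "act \<sigma> u = zerov"
  show "u = zerov"
  proof
    fix p show "u p = zerov p"
      using act_at[OF s, of u "fst p" "snd p"] z by (simp add: zerov_def)
  qed
next
  assume "u = zerov" then show "act \<sigma> u = zerov" by (auto simp: act_def zerov_def)
qed

lemma act_nonneg: "nonneg_vec u \<Longrightarrow> nonneg_vec (act \<sigma> u)"
  by (auto simp: nonneg_vec_def act_def)

lemma emb_Sym:
  assumes u: "u \<in> V c" and v: "v \<in> V c" and e: "emb u v"
  shows "\<exists>\<sigma>\<in>Sym. \<forall>p. act \<sigma> u p \<le> v p"
proof -
  obtain h where h: "inj_on h (vsupp u)" "\<forall>i\<in>vsupp u. \<forall>j. u (i, j) \<le> v (h i, j)"
    using e by (auto simp: emb_def)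
  have uz: "u \<in> Zfin c" "nonneg_vec u" using u by (auto simp: V_def)
  have vz: "v \<in> Zfin c" "nonneg_vec v" using v by (auto simp: V_def)
  have "0 \<notin> vsupp u" using vsupp_nz[OF uz(1)] by blast
  moreover have "0 \<notin> h ` vsupp u"
  proof
    assume "0 \<in> h ` vsupp u"
    then obtain i where i0: "0 = h i" and i1: "i \<in> vsupp u" by (rule imageE)
    then have i: "i \<in> vsupp u" "h i = 0" by simp_all
    then obtain j where "u (i, j) \<noteq> 0" by (auto simp: vsupp_def)
    then have "u (i, j) > 0" using uz(2) by (simp add: nonneg_vec_def order_less_le)
    then have "v (h i, j) > 0" using h(2) i(1) by (meson order_less_le_trans)
    then have "v (h i, j) \<noteq> 0" by simp
    then have "h i \<in> vsupp v" unfolding vsupp_def by blast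
    then show False using vsupp_nz[OF vz(1)] i(2) by blast
  qed
  ultimately obtain \<sigma> where s: "\<sigma> \<in> Sym" "\<forall>i\<in>vsupp u. \<sigma> i = h i"
    using Sym_ext[OF vsupp_finite[OF uz(1)] _ h(1)] by blast
  have "u (i, j) \<le> v (\<sigma> i, j)" for i j
  proof (cases "i \<in> vsupp u")
    case True then show ?thesis using h(2) s(2) by simp
  next
    case False then have "u (i, j) = 0" by (auto simp: vsupp_def)
    then show ?thesis using vz(2) by (simp add: nonneg_vec_def)
  qed
  then show ?thesis using act_le[OF s(1)] s(1) by blast
qed

lemma nn_span_add: "u \<in> nn_span H \<Longrightarrow> w \<in> nn_span H \<Longrightarrow> addv u w \<in> nn_span H"
proof (induction u rule: nn_span.induct)
  case zero then show ?case by (simp add: addv_def)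
next
  case (add_gen h v)
  then have "addv v w \<in> nn_span H" by simp
  from nn_span.add_gen[OF add_gen.hyps(1) this]
  show ?case by (simp add: addv_def add.assoc)
qed



fun sp :: "vec set \<Rightarrow> nat \<Rightarrow> vec list" where
  "sp A 0 = []"
| "sp A (Suc n) = sp A n @ [SOME x. x \<in> A \<and> x \<notin> sym_orbit (set (sp A n))]"

lemma length_sp: "length (sp A n) = n"
  by (induction n) auto

lemma sp_nth: "k < n \<Longrightarrow> sp A n ! k = sp A (Suc k) ! k"
proof (induction n)
  case 0 then show ?case by simp
next
  case (Suc n) then show ?case
    by (cases "k = n") (auto simp: nth_append length_sp simp del: sp.simps(2), simp add: nth_append length_sp)
qed

theorem main_thm:
  fixes c :: nat and L :: "vec set"
  assumes lat: "is_lattice c L" and inv: "sym_invariant L"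
  shows "\<exists>H. finite H \<and> equivariant_hilbert_basis {v \<in> L. nonneg_vec v} H"
proof -
  define M where "M = {v \<in> L. nonneg_vec v}"
  have LZ: "L \<subseteq> Zfin c" and L0: "zerov \<in> L"
    and Ladd: "\<And>u v. u \<in> L \<Longrightarrow> v \<in> L \<Longrightarrow> addv u v \<in> L"
    and Lneg: "\<And>v. v \<in> L \<Longrightarrow> (\<lambda>p. - v p) \<in> L"
    using lat by (auto simp: is_lattice_def zerov_def addv_def)
  have MV: "M \<subseteq> V c" using LZ by (auto simp: M_def V_def)
  have M0: "zerov \<in> M" using L0 by (simp add: M_def nonneg_vec_def zerov_def)
  have Madd: "addv u v \<in> M" if "u \<in> M" "v \<in> M" for u v
    using that Ladd by (auto simp: M_def nonneg_vec_def addv_def)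
  have Mact: "act \<sigma> u \<in> M" if "\<sigma> \<in> Sym" "u \<in> M" for \<sigma> u
    using that inv act_nonneg by (auto simp: M_def sym_invariant_def)
  define Irr where "Irr = {v \<in> M. v \<noteq> zerov \<and> (\<forall>a\<in>M. \<forall>b\<in>M. v = addv a b \<longrightarrow> a = zerov \<or> b = zerov)}"
  have IrrM: "Irr \<subseteq> M" by (auto simp: Irr_def)
  have Irr_inv: "act \<sigma> v \<in> Irr" if s: "\<sigma> \<in> Sym" and v: "v \<in> Irr" for \<sigma> v
  proof -
    have vM: "v \<in> M" and vnz: "v \<noteq> zerov" using v by (auto simp: Irr_def)
    have "act \<sigma> v \<in> M" using Mact[OF s vM] .
    moreover have "act \<sigma> v \<noteq> zerov" using act_zero_iff[OF s] vnz by simp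
    moreover have "a = zerov \<or> b = zerov" if ab: "a \<in> M" "b \<in> M" "act \<sigma> v = addv a b" for a b
    proof -
      define \<tau> where "\<tau> = inv \<sigma>"
      have t: "\<tau> \<in> Sym" using Sym_inv[OF s] by (simp add: \<tau>_def)
      have "v = act \<tau> (act \<sigma> v)" using act_inv_act[OF s] by (simp add: \<tau>_def)
      also have "\<dots> = addv (act \<tau> a) (act \<tau> b)" using ab(3) by (simp add: act_addv)
      finally have "act \<tau> a = zerov \<or> act \<tau> b = zerov"
        using v Mact[OF t ab(1)] Mact[OF t ab(2)] unfolding Irr_def by blast
      then show ?thesis using act_zero_iff[OF t] by blast
    qed
    ultimately show ?thesis unfolding Irr_def by blast
  qed
  have "\<exists>H. finite H \<and> H \<subseteq> Irr \<and> Irr \<subseteq> sym_orbit H"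
  proof (rule ccontr)
    assume nf: "\<not> ?thesis"
    have step: "\<exists>x. x \<in> Irr \<and> x \<notin> sym_orbit (set (sp Irr n)) \<and> set (sp Irr n) \<subseteq> Irr" for n
    proof (induction n)
      case 0
      have "\<not> Irr \<subseteq> sym_orbit {}" using nf by blast
      then show ?case by auto
    next
      case (Suc n)
      define x where "x = (SOME x. x \<in> Irr \<and> x \<notin> sym_orbit (set (sp Irr n)))"
      have "x \<in> Irr" using someI_ex[of "\<lambda>x. x \<in> Irr \<and> x \<notin> sym_orbit (set (sp Irr n))"] Suc
        unfolding x_def by blast
      moreover have "set (sp Irr n) \<subseteq> Irr" using Suc by blast
      ultimately have sub: "set (sp Irr (Suc n)) \<subseteq> Irr" by (simp add: x_def[symmetric])
      then have "\<not> Irr \<subseteq> sym_orbit (set (sp Irr (Suc n)))" using nf by blast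
      then show ?case using sub by blast
    qed
    define f where "f n = sp Irr (Suc n) ! n" for n
    have fspec: "f n \<in> Irr \<and> f n \<notin> sym_orbit (set (sp Irr n))" for n
    proof -
      have "f n = (SOME x. x \<in> Irr \<and> x \<notin> sym_orbit (set (sp Irr n)))"
        by (simp add: f_def nth_append length_sp)
      then show ?thesis using someI_ex[of "\<lambda>x. x \<in> Irr \<and> x \<notin> sym_orbit (set (sp Irr n))"] step[of n]
        by auto
    qed
    have fV: "f n \<in> V c" for n using fspec[of n] IrrM MV by blast
    obtain i j where ij: "i < j" "emb (f i) (f j)" using higman[of f, OF fV] by blast
    obtain \<sigma> where s: "\<sigma> \<in> Sym" "\<forall>p. act \<sigma> (f i) p \<le> f j p"
      using emb_Sym[OF fV fV ij(2)] by blast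
    define a where "a = act \<sigma> (f i)"
    define b where "b = (\<lambda>p. f j p + - a p)"
    have fiI: "f i \<in> Irr" and fjI: "f j \<in> Irr" using fspec by blast+
    have aM: "a \<in> M" using Mact[OF s(1)] fiI IrrM by (auto simp: a_def)
    have "b \<in> L" using Ladd[of "f j" "\<lambda>p. - a p"] Lneg[of a] aM fjI IrrM
      by (auto simp: b_def addv_def M_def)
    moreover have "nonneg_vec b" using s(2) by (simp add: b_def a_def nonneg_vec_def)
    ultimately have bM: "b \<in> M" by (simp add: M_def)
    have fj: "f j = addv a b" by (simp add: addv_def b_def)
    have "a = zerov \<or> b = zerov" using fjI aM bM fj unfolding Irr_def by blast
    moreover have "a \<noteq> zerov" using act_zero_iff[OF s(1)] fiI by (auto simp: a_def Irr_def)
    ultimately have "b = zerov" by blast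
    then have "f j = act \<sigma> (f i)" using fj by (simp add: addv_def zerov_def a_def)
    moreover have "f i \<in> set (sp Irr j)"
    proof -
      have "sp Irr j ! i = f i" using ij(1) by (simp add: sp_nth f_def)
      then show ?thesis using ij(1) by (metis length_sp nth_mem)
    qed
    ultimately have "f j \<in> sym_orbit (set (sp Irr j))" using s(1) unfolding sym_orbit_def by blast
    then show False using fspec by blast
  qed
  then obtain H where H: "finite H" "H \<subseteq> Irr" "Irr \<subseteq> sym_orbit H" by blast
  have orb: "sym_orbit H = Irr"
  proof
    show "sym_orbit H \<subseteq> Irr" using H(2) Irr_inv unfolding sym_orbit_def by blast
  qed (rule H(3))
  have span_sub: "nn_span G \<subseteq> M" if "G \<subseteq> M" for G
  proof
    fix x assume "x \<in> nn_span G"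
    then show "x \<in> M"
    proof (induction x rule: nn_span.induct)
      case zero then show ?case using M0 by (simp add: zerov_def)
    next
      case (add_gen h v) then show ?case using Madd[of h v] that by (auto simp: addv_def)
    qed
  qed
  define mu where "mu v = nat (sum v {p. v p \<noteq> 0})" for v :: vec
  have mu_less: "mu b < mu v" if ab0: "a \<in> M" "b \<in> M" "a \<noteq> zerov" "v = addv a b" for a b v
  proof -
    have an: "\<And>p. a p \<ge> 0" and bn: "\<And>p. b p \<ge> 0" using ab0 by (auto simp: M_def nonneg_vec_def)
    have vM: "v \<in> M" using Madd ab0 by simp
    define S where "S = {p. v p \<noteq> 0}"
    have finS: "finite S" using vM LZ by (auto simp: S_def M_def Zfin_def)
    have "\<exists>p0. a p0 \<noteq> 0"
    proof (rule ccontr)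
      assume "\<not> (\<exists>p0. a p0 \<noteq> 0)"
      then have "a = zerov" by (auto simp: zerov_def)
      then show False using ab0(3) by simp
    qed
    then obtain p0 where p0: "a p0 \<noteq> 0" by blast
    have "v p0 = a p0 + b p0" using ab0(4) by (simp add: addv_def)
    moreover have "0 \<le> a p0" "0 \<le> b p0" using an bn by blast+
    ultimately have "v p0 \<noteq> 0" using p0 by linarith
    then have p0S: "p0 \<in> S" by (simp add: S_def)
    have bsub: "{p. b p \<noteq> 0} \<subseteq> S"
    proof
      fix p assume "p \<in> {p. b p \<noteq> 0}"
      then have "b p \<noteq> 0" by simp
      moreover have "v p = a p + b p" using ab0(4) by (simp add: addv_def)
      moreover have "0 \<le> a p" "0 \<le> b p" using an bn by blast+
      ultimately have "v p \<noteq> 0" by linarith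
      then show "p \<in> S" by (simp add: S_def)
    qed
    have sb: "sum b {p. b p \<noteq> 0} = sum b S"
      by (rule sum.mono_neutral_left[OF finS bsub]) auto
    have sv: "sum v S = sum a S + sum b S" using ab0(4) by (simp add: addv_def sum.distrib)
    have "a p0 \<le> sum a S" using member_le_sum[OF p0S] an finS by (metis)
    moreover have "a p0 > 0" using an p0 by (simp add: order_less_le)
    moreover have "sum b S \<ge> 0" using bn by (simp add: sum_nonneg)
    ultimately show ?thesis using sb sv by (simp add: mu_def S_def)
  qed
  have inspan: "v \<in> nn_span Irr" if "v \<in> M" for v
    using that
  proof (induction v rule: measure_induct_rule[where f = mu])
    case (less v)
    show ?case
    proof (cases "v = zerov")
      case True then show ?thesis using nn_span.zero by (simp add: zerov_def)
    next
      case nz: False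
      show ?thesis
      proof (cases "v \<in> Irr")
        case True
        have "(\<lambda>p. v p + zerov p) \<in> nn_span Irr"
          using nn_span.add_gen[OF True nn_span.zero] by (simp add: zerov_def)
        then show ?thesis by (simp add: zerov_def)
      next
        case False
        then obtain a b where ab: "a \<in> M" "b \<in> M" "v = addv a b" "a \<noteq> zerov" "b \<noteq> zerov"
          using nz less.prems unfolding Irr_def by blast
        have "mu b < mu v" using mu_less[OF ab(1,2,4,3)] .
        moreover have "mu a < mu v" using mu_less[OF ab(2,1,5)] ab(3) by (simp add: addv_def add.commute)
        ultimately show ?thesis using less.IH ab nn_span_add by simp
      qed
    qed
  qed
  have spanIrr: "nn_span Irr = M" using span_sub[OF IrrM] inspan by blast
  have minimal: "nn_span H' \<noteq> M" if H': "H' \<subset> Irr" for H'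
  proof
    assume eq: "nn_span H' = M"
    obtain x where x: "x \<in> Irr" "x \<notin> H'" using H' by blast
    then have "x \<in> nn_span H'" using eq IrrM by blast
    then show False
    proof (cases rule: nn_span.cases)
      case zero then show False using x(1) by (simp add: Irr_def zerov_def)
    next
      case (add_gen h w)
      have hI: "h \<in> Irr" using add_gen H' by blast
      have wM: "w \<in> M" using add_gen(3) eq by blast
      have "h = zerov \<or> w = zerov" using x(1) hI IrrM wM add_gen(1) unfolding Irr_def addv_def by blast
      moreover have "h \<noteq> zerov" using hI by (simp add: Irr_def)
      ultimately have "x = h" using add_gen(1) by (simp add: zerov_def)
      then show False using x hI add_gen(2) by simp
    qed
  qed
  have "equivariant_hilbert_basis M H"
    unfolding equivariant_hilbert_basis_def hilbert_basis_def orb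
    using H(2) IrrM spanIrr minimal by blast
  then show ?thesis using H(1) M_def by blast
qed


theorem lemma4p13:
  fixes c :: nat and L :: "(nat \<times> nat \<Rightarrow> int) set"
  assumes "1 \<le> c"
    and "is_lattice c L"
    and "sym_invariant L"
  shows "\<exists>H. finite H \<and> equivariant_hilbert_basis {v \<in> L. nonneg_vec v} H"
  using main_thm[OF assms(2) assms(3)] by simp

end
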